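(* Let $n,r,c$ be integers such that $r\geq 3$, $c\geq 1$, and $n\geq r(r-1)\big((r-1)(r-2)+1\big)c$. If $(r^2-r)$ divides $n$ and an affine plane of order $r$ exists, then there exists a graph $G$ on $n$ vertices with $\delta(G) = \left(1-\frac{r-2}{r^2-r}\right)n-c-1$ such that $\mathrm{mc}_r(G)\leq \frac{n}{r-1}-c$.
   Context: An affine plane of order $q$ is a $q$-uniform hypergraph on $q^2$ vertices (points) with $q(q+1)$ edges (lines) such that each pair of distinct points lies in exactly one line. $\delta(G)$ denotes the minimum degree of $G$. For a graph $G$ and a positive integer $r$, $\mathrm{mc}_r(G)$ is the largest integer $m$ such that in every coloring of the edges of $G$ with $r$ colors there is a monochromatic component (a maximal connected subgraph all of whose edges have one color) with at least $m$ vertices. *)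

theory Defs
  imports Complex_Main
begin

definition affine_plane :: "nat \<Rightarrow> 'a set \<Rightarrow> 'a set set \<Rightarrow> bool" where
  "affine_plane q P L \<longleftrightarrow> finite P \<and> card P = q^2 \<and> finite L \<and> card L = q * (q + 1) \<and>
     (\<forall>l\<in>L. l \<subseteq> P \<and> card l = q) \<and>
     (\<forall>x\<in>P. \<forall>y\<in>P. x \<noteq> y \<longrightarrow> (\<exists>!l. l \<in> L \<and> x \<in> l \<and> y \<in> l))"

definition simple_graph :: "'a set \<Rightarrow> 'a set set \<Rightarrow> bool" where
  "simple_graph V E \<longleftrightarrow> finite V \<and> (\<forall>e\<in>E. e \<subseteq> V \<and> card e = 2)"

definition degree :: "'a set set \<Rightarrow> 'a \<Rightarrow> nat" where
  "degree E v = card {e \<in> E. v \<in> e}"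

definition min_degree :: "'a set \<Rightarrow> 'a set set \<Rightarrow> nat" where
  "min_degree V E = Min (degree E ` V)"

definition edge_coloring :: "nat \<Rightarrow> 'a set set \<Rightarrow> ('a set \<Rightarrow> nat) \<Rightarrow> bool" where
  "edge_coloring r E col \<longleftrightarrow> (\<forall>e\<in>E. col e < r)"

definition mono_adj :: "'a set set \<Rightarrow> ('a set \<Rightarrow> nat) \<Rightarrow> nat \<Rightarrow> 'a \<Rightarrow> 'a \<Rightarrow> bool" where
  "mono_adj E col i u v \<longleftrightarrow> {u, v} \<in> E \<and> col {u, v} = i"

definition mono_component :: "'a set \<Rightarrow> 'a set set \<Rightarrow> ('a set \<Rightarrow> nat) \<Rightarrow> nat \<Rightarrow> 'a \<Rightarrow> 'a set" where
  "mono_component V E col i v = {u \<in> V. (mono_adj E col i)\<^sup>*\<^sup>* v u}"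

definition mc :: "nat \<Rightarrow> 'a set \<Rightarrow> 'a set set \<Rightarrow> nat" where
  "mc r V E = (GREATEST m. \<forall>col. edge_coloring r E col \<longrightarrow>
      (\<exists>i<r. \<exists>v\<in>V. card (mono_component V E col i v) \<ge> m))"

end

theory Submission
  imports Defs "HOL-Library.Nat_Bijection"
begin

definition apar :: "'a set \<Rightarrow> 'a set \<Rightarrow> bool" where
  "apar l m \<longleftrightarrow> l = m \<or> l \<inter> m = {}"

definition lineof :: "'a set set \<Rightarrow> 'a \<Rightarrow> 'a \<Rightarrow> 'a set" where
  "lineof L x y = (THE l. l \<in> L \<and> x \<in> l \<and> y \<in> l)"

definition parl :: "'a set set \<Rightarrow> 'a set \<Rightarrow> 'a \<Rightarrow> 'a set" where
  "parl L m p = (THE l. l \<in> L \<and> p \<in> l \<and> apar l m)"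

locale aff =
  fixes q :: nat and P :: "'a set" and L :: "'a set set"
  assumes AP: "affine_plane q P L" and q2: "q \<ge> 2"
begin

lemma finP: "finite P" and cardP: "card P = q^2" and finL: "finite L"
  and lineP: "l \<in> L \<Longrightarrow> l \<subseteq> P" and cardl: "l \<in> L \<Longrightarrow> card l = q"
  and uniq: "x \<in> P \<Longrightarrow> y \<in> P \<Longrightarrow> x \<noteq> y \<Longrightarrow> \<exists>!l. l \<in> L \<and> x \<in> l \<and> y \<in> l"
  using AP unfolding affine_plane_def by auto

lemma finl: "l \<in> L \<Longrightarrow> finite l"
  using finP lineP finite_subset by blast

lemma two_eq: "l \<in> L \<Longrightarrow> m \<in> L \<Longrightarrow> x \<in> l \<Longrightarrow> y \<in> l \<Longrightarrow> x \<in> m \<Longrightarrow> y \<in> m \<Longrightarrow> x \<noteq> y \<Longrightarrow> l = m"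
  using uniq lineP by blast

lemma inter_le1: "l \<in> L \<Longrightarrow> m \<in> L \<Longrightarrow> l \<noteq> m \<Longrightarrow> card (l \<inter> m) \<le> 1"
  using two_eq card_le_Suc0_iff_eq[of "l \<inter> m"] finl by auto

lemma lineof: "x \<in> P \<Longrightarrow> y \<in> P \<Longrightarrow> x \<noteq> y \<Longrightarrow> lineof L x y \<in> L \<and> x \<in> lineof L x y \<and> y \<in> lineof L x y"
  unfolding lineof_def using theI'[OF uniq] by blast

lemma lineof_eq: "l \<in> L \<Longrightarrow> x \<in> l \<Longrightarrow> y \<in> l \<Longrightarrow> x \<noteq> y \<Longrightarrow> lineof L x y = l"
  using lineof two_eq lineP by blast

lemma lines_through: assumes p: "p \<in> P" shows "card {l \<in> L. p \<in> l} = q + 1"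
proof -
  let ?Lp = "{l \<in> L. p \<in> l}"
  have fin: "finite ?Lp" using finL by simp
  have U: "P - {p} = (\<Union>l\<in>?Lp. l - {p})"
  proof
    show "P - {p} \<subseteq> (\<Union>l\<in>?Lp. l - {p})"
    proof
      fix x assume "x \<in> P - {p}"
      then have "lineof L p x \<in> ?Lp" "x \<in> lineof L p x - {p}" using lineof[of p x] p by auto
      then show "x \<in> (\<Union>l\<in>?Lp. l - {p})" by blast
    qed
    show "(\<Union>l\<in>?Lp. l - {p}) \<subseteq> P - {p}" using lineP by blast
  qed
  have "card (P - {p}) = (\<Sum>l\<in>?Lp. card (l - {p}))"
    unfolding U
  proof (rule card_UN_disjoint)
    show "\<forall>i\<in>?Lp. \<forall>j\<in>?Lp. i \<noteq> j \<longrightarrow> (i - {p}) \<inter> (j - {p}) = {}"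
    proof (intro ballI impI)
      fix i j assume ij: "i \<in> ?Lp" "j \<in> ?Lp" "i \<noteq> j"
      show "(i - {p}) \<inter> (j - {p}) = {}"
      proof (rule ccontr)
        assume "(i - {p}) \<inter> (j - {p}) \<noteq> {}"
        then obtain x where "x \<in> i" "x \<in> j" "x \<noteq> p" by blast
        then show False using two_eq[of i j p x] ij by blast
      qed
    qed
  qed (use fin finl in auto)
  also have "\<dots> = (\<Sum>l\<in>?Lp. q - 1)"
    by (rule sum.cong) (auto simp: cardl finl)
  also have "\<dots> = card ?Lp * (q - 1)" by simp
  finally have e: "q^2 - 1 = card ?Lp * (q - 1)" using p finP cardP by simp
  have "q^2 - 1 = (q + 1) * (q - 1)" using q2
    by (simp add: power2_eq_square algebra_simps)
  with e have "card ?Lp * (q - 1) = (q + 1) * (q - 1)" by simp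
  moreover have "q - 1 \<noteq> 0" using q2 by simp
  ultimately show ?thesis using mult_right_cancel by blast
qed

lemma playfair: assumes l: "l \<in> L" and p: "p \<in> P" and pl: "p \<notin> l"
  shows "\<exists>!m. m \<in> L \<and> p \<in> m \<and> m \<inter> l = {}"
proof -
  let ?Lp = "{m \<in> L. p \<in> m}"
  let ?Mt = "{m \<in> ?Lp. m \<inter> l \<noteq> {}}"
  have img: "?Mt = lineof L p ` l"
  proof
    show "?Mt \<subseteq> lineof L p ` l"
    proof
      fix m assume m: "m \<in> ?Mt"
      then obtain x where x: "x \<in> m" "x \<in> l" by blast
      then have "x \<noteq> p" using pl by blast
      then have "lineof L p x = m" using lineof_eq m x by auto
      then show "m \<in> lineof L p ` l" using x by blast
    qed
    show "lineof L p ` l \<subseteq> ?Mt"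
    proof
      fix m assume "m \<in> lineof L p ` l"
      then obtain x where x: "x \<in> l" "m = lineof L p x" by blast
      then have "x \<noteq> p" "x \<in> P" using pl lineP l by auto
      then show "m \<in> ?Mt" using lineof[of p x] p x by blast
    qed
  qed
  have inj: "inj_on (lineof L p) l"
  proof
    fix x x' assume x: "x \<in> l" "x' \<in> l" and eq: "lineof L p x = lineof L p x'"
    show "x = x'"
    proof (rule ccontr)
      assume "x \<noteq> x'"
      have xp: "x \<noteq> p" "x' \<noteq> p" "x \<in> P" "x' \<in> P" using x pl lineP l by auto
      have "lineof L p x = l"
        using two_eq[of "lineof L p x" l x x'] lineof[of p x] lineof[of p x'] eq x xp p l \<open>x \<noteq> x'\<close> by auto
      then show False using lineof[of p x] xp p pl by auto
    qed
  qed
  have cMt: "card ?Mt = q" using img card_image[OF inj] cardl l by simp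
  have "card (?Lp - ?Mt) = 1"
    using lines_through[OF p] cMt card_Diff_subset[of ?Mt ?Lp] finL by auto
  then obtain m where m: "?Lp - ?Mt = {m}" using card_1_singletonE by blast
  show ?thesis
  proof
    show "m \<in> L \<and> p \<in> m \<and> m \<inter> l = {}" using m by blast
    fix m' assume "m' \<in> L \<and> p \<in> m' \<and> m' \<inter> l = {}"
    then have "m' \<in> ?Lp - ?Mt" by blast
    then show "m' = m" using m by blast
  qed
qed

lemma parl_ex1: assumes m: "m \<in> L" and p: "p \<in> P"
  shows "\<exists>!l. l \<in> L \<and> p \<in> l \<and> apar l m"
proof (cases "p \<in> m")
  case True
  show ?thesis
    by (rule ex1I[of _ m]) (use True m in \<open>auto simp: apar_def\<close>)
next
  case False
  then obtain l where l: "l \<in> L" "p \<in> l" "l \<inter> m = {}" and u: "\<And>l'. l' \<in> L \<and> p \<in> l' \<and> l' \<inter> m = {} \<Longrightarrow> l' = l"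
    using playfair[OF m p] by metis
  show ?thesis
  proof (rule ex1I[of _ l])
    show "l \<in> L \<and> p \<in> l \<and> apar l m" using l by (simp add: apar_def)
    fix l' assume "l' \<in> L \<and> p \<in> l' \<and> apar l' m"
    then show "l' = l" using u False by (auto simp: apar_def)
  qed
qed

lemma parl: "m \<in> L \<Longrightarrow> p \<in> P \<Longrightarrow> parl L m p \<in> L \<and> p \<in> parl L m p \<and> apar (parl L m p) m"
  unfolding parl_def using theI'[OF parl_ex1] by blast

lemma parl_eq: assumes "m \<in> L" "l \<in> L" "p \<in> l" "apar l m" shows "parl L m p = l"
proof -
  have p: "p \<in> P" using assms lineP by blast
  show ?thesis using parl[OF assms(1) p] parl_ex1[OF assms(1) p] assms by blast
qed

lemma apar_sym: "apar l m \<Longrightarrow> apar m l"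
  by (auto simp: apar_def)

lemma apar_trans: assumes "l \<in> L" "m \<in> L" "n \<in> L" "apar l m" "apar m n" shows "apar l n"
proof (cases "l \<inter> n = {}")
  case True then show ?thesis by (simp add: apar_def)
next
  case False
  then obtain x where x: "x \<in> l" "x \<in> n" by blast
  have "apar n m" using assms apar_sym by blast
  have "parl L m x = l" by (rule parl_eq) (use assms x in auto)
  moreover have "parl L m x = n" by (rule parl_eq) (use assms x \<open>apar n m\<close> in auto)
  ultimately have "l = n" by simp
  then show ?thesis by (simp add: apar_def)
qed

end

lemma sum_if_card: "finite S \<Longrightarrow> (\<Sum>p\<in>S. if p \<in> A then (a::nat) else 0) = a * card (S \<inter> A)"
  by (simp add: sum.inter_restrict[symmetric])

locale cons = aff r P L for r and P :: "nat set" and L +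
  fixes ls D0 :: "nat set" and z0 y g k c t :: nat
  assumes r3: "r \<ge> 3"
    and lsL: "ls \<in> L" and D0L: "D0 \<in> L" and z0ls: "z0 \<in> ls" and z0D0: "z0 \<in> D0"
    and lsD0: "ls \<noteq> D0" and yD0: "y \<in> D0" and gD0: "g \<in> D0"
    and yz0: "y \<noteq> z0" and gz0: "g \<noteq> z0" and gy: "g \<noteq> y"
    and kct: "k = c + t" and tc: "(r - 1) * (r - 2) * c \<le> t" and c1: "c \<ge> 1"
begin

definition "ly = parl L ls y"

definition w :: "nat \<Rightarrow> nat" where
  "w p = (if p \<in> ls then (if p = z0 then k - c else 0) else if p = y then 0
          else if p \<in> ly then k + (r - 2) * c else if p = g then k + c
          else if p \<in> D0 then k else k - c)"

definition "f p = (k - c) + (if p \<in> ly then (r - 1) * c else 0) + (if p \<in> D0 - {z0} then 2 * c else 0)"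

definition "W S = (\<Sum>p\<in>S. w p)"

lemma t2c: "2 * c \<le> t"
proof -
  have "2 \<le> (r - 1) * (r - 2)" using r3
  proof -
    obtain s where "r = s + 3" using r3 by (metis add.commute le_Suc_ex)
    then show ?thesis by (simp add: algebra_simps)
  qed
  then have "2 * c \<le> (r - 1) * (r - 2) * c" by simp
  then show ?thesis using tc by linarith
qed

lemma z0P: "z0 \<in> P" and yP: "y \<in> P" and gP: "g \<in> P"
  using lineP D0L z0D0 yD0 gD0 by auto

lemma D0ls: "D0 \<inter> ls = {z0}"
  using two_eq[OF lsL D0L] z0ls z0D0 lsD0 by blast

lemma yls: "y \<notin> ls" using D0ls yD0 yz0 by blast
lemma gls: "g \<notin> ls" using D0ls gD0 gz0 by blast

lemma ly: "ly \<in> L" "y \<in> ly" "apar ly ls"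
  using parl[OF lsL yP] unfolding ly_def by auto

lemma ly_ls: "ly \<inter> ls = {}"
  using ly yls unfolding apar_def by blast

lemma z0ly: "z0 \<notin> ly" using ly_ls z0ls by blast

lemma D0ly: "D0 \<inter> ly = {y}"
proof -
  have "ly \<noteq> D0" using z0ly z0D0 by blast
  then show ?thesis using two_eq[OF ly(1) D0L] yD0 ly(2) by blast
qed

lemma gly: "g \<notin> ly" using D0ly gD0 gy by blast

lemma card_ls: "card ls = r" and card_ly: "card ly = r" and card_D0: "card D0 = r"
  using cardl lsL ly D0L by auto

lemma fin_ls: "finite ls" and fin_ly: "finite ly" and fin_D0: "finite D0"
  using finl lsL ly D0L by auto

lemma w_ge: "w p > 0 \<Longrightarrow> k - c \<le> w p"
  unfolding w_def by (auto split: if_splits)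

lemma r1c: "(r - 1) * c = (r - 2) * c + c"
proof -
  have "r - 1 = (r - 2) + 1" using r3 by simp
  then show ?thesis by (metis add_mult_distrib mult_1)
qed

lemma w_le_f: "w p \<le> f p"
proof -
  have A: "p \<in> ly \<Longrightarrow> p \<in> D0 \<Longrightarrow> p = y" using D0ly by blast
  show ?thesis
    unfolding w_def f_def using z0ly gly gz0 gD0 kct r1c A z0ls by (auto split: if_splits)
qed

lemma sum_f: "finite S \<Longrightarrow> (\<Sum>p\<in>S. f p) = card S * (k - c) + (r - 1) * c * card (S \<inter> ly) + 2 * c * card (S \<inter> (D0 - {z0}))"
proof -
  assume S: "finite S"
  have "(\<Sum>p\<in>S. f p) = (\<Sum>p\<in>S. k - c) + (\<Sum>p\<in>S. if p \<in> ly then (r - 1) * c else 0) + (\<Sum>p\<in>S. if p \<in> D0 - {z0} then 2 * c else 0)"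
    unfolding f_def by (simp only: sum.distrib)
  also have "\<dots> = card S * (k - c) + (r - 1) * c * card (S \<inter> ly) + 2 * c * card (S \<inter> (D0 - {z0}))"
    by (simp only: sum_if_card[OF S] sum_constant of_nat_id mult.commute)
  finally show ?thesis .
qed

lemma W_le_f: "finite S \<Longrightarrow> W S \<le> card S * (k - c) + (r - 1) * c * card (S \<inter> ly) + 2 * c * card (S \<inter> (D0 - {z0}))"
proof -
  assume S: "finite S"
  have "W S \<le> (\<Sum>p\<in>S. f p)" unfolding W_def by (rule sum_mono) (rule w_le_f)
  then show ?thesis using sum_f[OF S] by simp
qed


lemma finP': "finite P" using finP .

lemma W_ls: "W ls = k - c"
proof -
  have "W ls = w z0 + (\<Sum>p\<in>ls - {z0}. w p)" unfolding W_def by (rule sum.remove[OF fin_ls z0ls])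
  moreover have "(\<Sum>p\<in>ls - {z0}. w p) = 0" by (rule sum.neutral) (auto simp: w_def)
  ultimately show ?thesis by (simp add: w_def z0ls)
qed

lemma W_ly: "W ly = (r - 1) * (k + (r - 2) * c)"
proof -
  have "W ly = w y + (\<Sum>p\<in>ly - {y}. w p)" unfolding W_def by (rule sum.remove[OF fin_ly ly(2)])
  moreover have "(\<Sum>p\<in>ly - {y}. w p) = (\<Sum>p\<in>ly - {y}. k + (r - 2) * c)"
    by (rule sum.cong) (use ly_ls in \<open>auto simp: w_def\<close>)
  moreover have "card (ly - {y}) = r - 1" using card_ly ly(2) fin_ly by simp
  ultimately show ?thesis by (simp add: w_def yls)
qed

lemma D0rest: "p \<in> D0 - {z0} - {y} - {g} \<Longrightarrow> w p = k"
  using D0ls D0ly unfolding w_def by auto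

lemma card_D0rest: "card (D0 - {z0} - {y} - {g}) = r - 3"
  using card_D0 fin_D0 z0D0 yD0 gD0 yz0 gz0 gy by (simp add: card_Diff_singleton_if)

lemma W_D0y: "W (D0 - {z0} - {y}) = k + c + (r - 3) * k"
proof -
  have "W (D0 - {z0} - {y}) = w g + (\<Sum>p\<in>D0 - {z0} - {y} - {g}. w p)" unfolding W_def
    by (rule sum.remove) (use fin_D0 gD0 gz0 gy in auto)
  moreover have "(\<Sum>p\<in>D0 - {z0} - {y} - {g}. w p) = (\<Sum>p\<in>D0 - {z0} - {y} - {g}. k)"
    by (rule sum.cong) (use D0rest in auto)
  moreover have "w g = k + c" using gls gy gly by (simp add: w_def)
  ultimately show ?thesis using card_D0rest by simp
qed

lemma W_D0: "W D0 = (r - 1) * k"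
proof -
  have "W D0 = w z0 + W (D0 - {z0})" unfolding W_def by (rule sum.remove[OF fin_D0 z0D0])
  moreover have "W (D0 - {z0}) = w y + W (D0 - {z0} - {y})" unfolding W_def
    by (rule sum.remove) (use fin_D0 yD0 yz0 in auto)
  moreover have "w y = 0" using yls by (simp add: w_def)
  moreover have "w z0 = k - c" using z0ls by (simp add: w_def)
  ultimately have "W D0 = (k - c) + (k + c + (r - 3) * k)" using W_D0y by simp
  also have "\<dots> = (r - 1) * k"
  proof -
    obtain s where "r = s + 3" using r3 by (metis add.commute le_Suc_ex)
    then show ?thesis using kct by (simp add: algebra_simps)
  qed
  finally show ?thesis .
qed

lemma W_P: "W P = r * (r - 1) * k"
proof -
  let ?D = "D0 - {z0} - {y}"
  let ?U = "ls \<union> ly \<union> ?D"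
  let ?R = "P - ?U"
  have sub: "?U \<subseteq> P" using lineP lsL ly(1) D0L by blast
  have finU: "finite ?U" using fin_ls fin_ly fin_D0 by simp
  have dj1: "ls \<inter> ly = {}" using ly_ls by blast
  have dj2: "(ls \<union> ly) \<inter> ?D = {}" using D0ls D0ly by blast
  have WU: "W ?U = W ls + W ly + W ?D" unfolding W_def
    by (simp add: sum.union_disjoint fin_ls fin_ly fin_D0 dj1 dj2)
  have cU: "card ?U = card ls + card ly + card ?D"
    by (simp add: card_Un_disjoint fin_ls fin_ly fin_D0 dj1 dj2)
  have cD: "card ?D = r - 2" using card_D0 fin_D0 z0D0 yD0 yz0 by (simp add: card_Diff_singleton_if)
  have cR: "card ?R + card ?U = r^2" using card_Diff_subset[OF finU sub] card_mono[OF finP sub] cardP by simp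
  have WR: "W ?R = card ?R * (k - c)" unfolding W_def
  proof -
    have "(\<Sum>p\<in>?R. w p) = (\<Sum>p\<in>?R. k - c)" by (rule sum.cong) (use z0ls ly(2) gD0 gz0 gy in \<open>auto simp: w_def\<close>)
    then show "(\<Sum>p\<in>?R. w p) = card ?R * (k - c)" by simp
  qed
  have "W P = W ?R + W ?U" unfolding W_def by (rule sum.subset_diff[OF sub finP])
  then have e: "W P = card ?R * (k - c) + (k - c) + (r - 1) * (k + (r - 2) * c) + (k + c + (r - 3) * k)"
    using WR WU W_ls W_ly W_D0y by simp
  obtain s where s: "r = s + 3" using r3 by (metis add.commute le_Suc_ex)
  have "card ?R + (3 * s + 7) = (s + 3)^2" using cR cU cD card_ls card_ly s by simp
  then have cR2: "card ?R = s * s + 3 * s + 2" by (simp add: power2_eq_square algebra_simps)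
  show ?thesis using e cR2 s kct by (simp add: algebra_simps)
qed


lemma mul_card1: "card X \<le> 1 \<Longrightarrow> (a::nat) * card X \<le> a"
  by (metis mult.right_neutral mult_le_mono2)

lemma A1: "(r - 1) * (k - c) + (r - 1) * c = (r - 1) * k"
proof -
  obtain s where s: "r = s + 3" using r3 by (metis add.commute le_Suc_ex)
  show ?thesis using s kct by (simp add: algebra_simps)
qed

lemma A2: "(r - 1) * (k - c) + (r - 1) * c + 2 * c + c \<le> r * k"
proof -
  obtain s where s: "r = s + 3" using r3 by (metis add.commute le_Suc_ex)
  show ?thesis using s kct t2c by (simp add: algebra_simps)
qed

lemma A3: "r * (k - c) + (r - 1) * c + c \<le> r * k"
proof -
  obtain s where s: "r = s + 3" using r3 by (metis add.commute le_Suc_ex)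
  show ?thesis using s kct by (simp add: algebra_simps)
qed

lemma A4: "r * (k - c) + 2 * c + c \<le> r * k"
proof -
  obtain s where s: "r = s + 3" using r3 by (metis add.commute le_Suc_ex)
  show ?thesis using s kct by (simp add: algebra_simps)
qed

lemma A5: "(r - 1) * (k + (r - 2) * c) + c \<le> r * k"
proof -
  obtain s where s: "r = s + 3" using r3 by (metis add.commute le_Suc_ex)
  have "(s + 2) * (s + 1) * c \<le> t" using tc s by simp
  then show ?thesis using s kct by (simp add: algebra_simps)
qed

lemma A6: "(k - c) + c \<le> r * k"
proof -
  obtain s where s: "r = s + 3" using r3 by (metis add.commute le_Suc_ex)
  show ?thesis using s kct by (simp add: algebra_simps)
qed

lemma Dl_le: assumes p: "p \<in> P" shows "W (parl L D0 p) \<le> (r - 1) * k"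
proof -
  define l where "l = parl L D0 p"
  have l: "l \<in> L" "p \<in> l" "apar l D0" using parl[OF D0L p] l_def by auto
  show ?thesis
  proof (cases "l = D0")
    case True then show ?thesis using W_D0 l_def by simp
  next
    case False
    then have lD: "l \<inter> D0 = {}" using l(3) by (simp add: apar_def)
    have "l \<inter> ls \<noteq> {}"
    proof
      assume "l \<inter> ls = {}"
      then have "apar l ls" by (simp add: apar_def)
      then have "apar D0 ls" using apar_trans[OF D0L l(1) lsL] apar_sym[OF l(3)] by blast
      then show False using lsD0 z0ls z0D0 by (auto simp: apar_def)
    qed
    then obtain z where z: "z \<in> l" "z \<in> ls" by blast
    have zz0: "z \<noteq> z0" using z lD z0D0 by blast
    have wz: "w z = 0" using z zz0 by (simp add: w_def)
    have finl': "finite (l - {z})" using finl[OF l(1)] by simp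
    have "W l = w z + W (l - {z})" unfolding W_def by (rule sum.remove[OF finl[OF l(1)] z(1)])
    also have "\<dots> \<le> card (l - {z}) * (k - c) + (r - 1) * c * card ((l - {z}) \<inter> ly) + 2 * c * card ((l - {z}) \<inter> (D0 - {z0}))"
      using W_le_f[OF finl'] wz by simp
    finally have W1: "W l \<le> card (l - {z}) * (k - c) + (r - 1) * c * card ((l - {z}) \<inter> ly) + 2 * c * card ((l - {z}) \<inter> (D0 - {z0}))" .
    have c1: "card (l - {z}) = r - 1" using cardl[OF l(1)] z(1) finl[OF l(1)] by simp
    have c2: "(l - {z}) \<inter> (D0 - {z0}) = {}" using lD by blast
    have "card ((l - {z}) \<inter> ly) \<le> 1"
    proof -
      have "l \<noteq> ly" using lD ly(2) yD0 by blast
      then have "card (l \<inter> ly) \<le> 1" using inter_le1[OF l(1) ly(1)] by simp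
      moreover have "card ((l - {z}) \<inter> ly) \<le> card (l \<inter> ly)"
        by (rule card_mono) (use finl[OF l(1)] in auto)
      ultimately show ?thesis by simp
    qed
    then have c3: "(r - 1) * c * card ((l - {z}) \<inter> ly) \<le> (r - 1) * c" by (rule mul_card1)
    have "W l \<le> (r - 1) * (k - c) + (r - 1) * c * card ((l - {z}) \<inter> ly)" using W1 c1 c2 by simp
    then have "W l \<le> (r - 1) * (k - c) + (r - 1) * c" using c3 by linarith
    then show ?thesis using A1 l_def by simp
  qed
qed


lemma col_le: assumes l: "l \<in> L" and nD: "\<not> apar l D0" shows "W l + c \<le> r * k"
proof -
  have lD0: "l \<noteq> D0" using nD by (auto simp: apar_def)
  have finL': "finite l" using finl[OF l] .
  have cl: "card l = r" using cardl[OF l] .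
  have cD: "card (X \<inter> (D0 - {z0})) \<le> 1" if "X \<subseteq> l" for X
  proof -
    have "card (l \<inter> D0) \<le> 1" using inter_le1[OF l D0L lD0] .
    moreover have "card (X \<inter> (D0 - {z0})) \<le> card (l \<inter> D0)"
      by (rule card_mono) (use finL' that in auto)
    ultimately show ?thesis by simp
  qed
  have cY: "card (X \<inter> ly) \<le> 1" if "X \<subseteq> l" "l \<noteq> ly" for X
  proof -
    have "card (l \<inter> ly) \<le> 1" using inter_le1[OF l ly(1) that(2)] .
    moreover have "card (X \<inter> ly) \<le> card (l \<inter> ly)"
      by (rule card_mono) (use finL' that in auto)
    ultimately show ?thesis by simp
  qed
  show ?thesis
  proof (cases "l = ls")
    case True then show ?thesis using W_ls A6 by simp
  next
    case nls: False
    show ?thesis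
    proof (cases "l = ly")
      case True then show ?thesis using W_ly A5 by simp
    next
      case nly: False
      show ?thesis
      proof (cases "\<exists>z\<in>l. (z \<in> ls \<and> z \<noteq> z0) \<or> z = y")
        case True
        then obtain z where z: "z \<in> l" "(z \<in> ls \<and> z \<noteq> z0) \<or> z = y" by blast
        have wz: "w z = 0" using z yls by (auto simp: w_def)
        have finl': "finite (l - {z})" using finL' by simp
        have "W l = w z + W (l - {z})" unfolding W_def by (rule sum.remove[OF finL' z(1)])
        also have "\<dots> \<le> card (l - {z}) * (k - c) + (r - 1) * c * card ((l - {z}) \<inter> ly) + 2 * c * card ((l - {z}) \<inter> (D0 - {z0}))"
          using W_le_f[OF finl'] wz by simp
        finally have W1: "W l \<le> card (l - {z}) * (k - c) + (r - 1) * c * card ((l - {z}) \<inter> ly) + 2 * c * card ((l - {z}) \<inter> (D0 - {z0}))" .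
        have c1: "card (l - {z}) = r - 1" using cl z(1) finL' by simp
        have c2: "(r - 1) * c * card ((l - {z}) \<inter> ly) \<le> (r - 1) * c"
          by (rule mul_card1) (rule cY, use nly in auto)
        have c3: "2 * c * card ((l - {z}) \<inter> (D0 - {z0})) \<le> 2 * c"
          by (rule mul_card1) (rule cD, auto)
        have "W l \<le> (r - 1) * (k - c) + (r - 1) * c + 2 * c" using W1[unfolded c1] c2 c3 by linarith
        then show ?thesis using A2 by linarith
      next
        case noZ: False
        show ?thesis
        proof (cases "z0 \<in> l")
          case True
          have W1: "W l \<le> card l * (k - c) + (r - 1) * c * card (l \<inter> ly) + 2 * c * card (l \<inter> (D0 - {z0}))"
            using W_le_f[OF finL'] .
          have "l \<inter> (D0 - {z0}) = {}" using two_eq[OF l D0L] True z0D0 lD0 by blast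
          then have c3: "2 * c * card (l \<inter> (D0 - {z0})) = 0" by simp
          have c2: "(r - 1) * c * card (l \<inter> ly) \<le> (r - 1) * c"
            by (rule mul_card1) (rule cY, use nly in auto)
          have "W l \<le> r * (k - c) + (r - 1) * c" using W1[unfolded cl] c2 c3 by linarith
          then show ?thesis using A3 by linarith
        next
          case False
          have "l \<inter> ls = {}" using False noZ by blast
          then have "apar l ls" by (simp add: apar_def)
          then have "apar l ly" using apar_trans[OF l lsL ly(1)] apar_sym[OF ly(3)] by blast
          then have "l \<inter> ly = {}" using nly by (simp add: apar_def)
          then have c2: "(r - 1) * c * card (l \<inter> ly) = 0" by simp
          have W1: "W l \<le> card l * (k - c) + (r - 1) * c * card (l \<inter> ly) + 2 * c * card (l \<inter> (D0 - {z0}))"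
            using W_le_f[OF finL'] .
          have c3: "2 * c * card (l \<inter> (D0 - {z0})) \<le> 2 * c"
            by (rule mul_card1) (rule cD, auto)
          have "W l \<le> r * (k - c) + 2 * c" using W1[unfolded cl] c2 c3 by linarith
          then show ?thesis using A4 by linarith
        qed
      qed
    qed
  qed
qed


definition pt :: "nat \<Rightarrow> nat" where "pt u = fst (prod_decode u)"
definition V :: "nat set" where "V = prod_encode ` (SIGMA p:P. {..<w p})"
definition nonadj :: "nat \<Rightarrow> nat \<Rightarrow> bool" where
  "nonadj u v \<longleftrightarrow> pt u \<noteq> pt v \<and> (\<exists>l\<in>L. pt u \<in> l \<and> pt v \<in> l \<and> apar l D0)"
definition E :: "nat set set" where
  "E = {{u, v} | u v. u \<in> V \<and> v \<in> V \<and> u \<noteq> v \<and> \<not> nonadj u v}"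
definition "Dl p = parl L D0 p"

lemma ptV: "u \<in> V \<Longrightarrow> pt u \<in> P \<and> 0 < w (pt u)"
  unfolding V_def pt_def by auto

lemma V_sub: assumes "S \<subseteq> P" shows "{u \<in> V. pt u \<in> S} = prod_encode ` (SIGMA p:S. {..<w p})"
  using assms unfolding V_def pt_def by auto

lemma card_Vsub: assumes S: "S \<subseteq> P" shows "card {u \<in> V. pt u \<in> S} = W S"
proof -
  have fS: "finite S" using S finP finite_subset by blast
  have "card {u \<in> V. pt u \<in> S} = card (SIGMA p:S. {..<w p})"
    unfolding V_sub[OF S] by (rule card_image[OF inj_prod_encode])
  also have "\<dots> = W S" unfolding W_def using fS by simp
  finally show ?thesis .
qed

lemma VP: "V = {u \<in> V. pt u \<in> P}" using ptV by blast

lemma finV: "finite V" unfolding V_def using finP by simp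

lemma cardV: "card V = W P"
  using card_Vsub[of P] VP by simp

lemma nonadj_sym: "nonadj u v = nonadj v u"
  unfolding nonadj_def by auto

lemma Dl: "p \<in> P \<Longrightarrow> Dl p \<in> L \<and> p \<in> Dl p \<and> apar (Dl p) D0"
  unfolding Dl_def using parl[OF D0L] by blast

lemma nonadj_iff: assumes "u \<in> V" "v \<in> V" shows "nonadj v u \<longleftrightarrow> pt u \<in> Dl (pt v) - {pt v}"
proof
  assume "nonadj v u"
  then obtain l where l: "l \<in> L" "pt v \<in> l" "pt u \<in> l" "apar l D0" "pt v \<noteq> pt u"
    unfolding nonadj_def by blast
  then have "Dl (pt v) = l" unfolding Dl_def using parl_eq[OF D0L] by blast
  then show "pt u \<in> Dl (pt v) - {pt v}" using l by auto
next
  assume "pt u \<in> Dl (pt v) - {pt v}"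
  then have h: "pt u \<in> Dl (pt v)" "pt u \<noteq> pt v" by auto
  have pv: "pt v \<in> P" using ptV assms(2) by blast
  have D: "Dl (pt v) \<in> L" "pt v \<in> Dl (pt v)" "apar (Dl (pt v)) D0" using Dl[OF pv] by auto
  show "nonadj v u" unfolding nonadj_def using h D by auto
qed

lemma E_mem: "{a, b} \<in> E \<Longrightarrow> a \<in> V \<and> b \<in> V \<and> a \<noteq> b \<and> \<not> nonadj a b"
  unfolding E_def using nonadj_sym by (auto simp: doubleton_eq_iff)

lemma degree_eq: assumes v: "v \<in> V"
  shows "degree E v = W P - (1 + (W (Dl (pt v)) - w (pt v)))"
proof -
  let ?A = "{u \<in> V. u \<noteq> v \<and> \<not> nonadj v u}"
  let ?B = "{u \<in> V. pt u \<in> Dl (pt v) - {pt v}}"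
  have pv: "pt v \<in> P" using ptV v by blast
  have "{e \<in> E. v \<in> e} = (\<lambda>u. {v, u}) ` ?A"
  proof
    show "{e \<in> E. v \<in> e} \<subseteq> (\<lambda>u. {v, u}) ` ?A"
    proof
      fix e assume e: "e \<in> {e \<in> E. v \<in> e}"
      then obtain a b where ab: "e = {a, b}" "a \<in> V" "b \<in> V" "a \<noteq> b" "\<not> nonadj a b"
        unfolding E_def by blast
      show "e \<in> (\<lambda>u. {v, u}) ` ?A"
      proof (cases "v = a")
        case True then show ?thesis using ab by blast
      next
        case False
        then have "v = b" using e ab by blast
        then show ?thesis using ab nonadj_sym by (auto simp: insert_commute)
      qed
    qed
    show "(\<lambda>u. {v, u}) ` ?A \<subseteq> {e \<in> E. v \<in> e}"
      unfolding E_def using v by blast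
  qed
  moreover have "inj_on (\<lambda>u. {v, u}) ?A"
    by (rule inj_onI) (auto simp: doubleton_eq_iff)
  ultimately have d: "degree E v = card ?A" unfolding degree_def by (simp add: card_image)
  have "?A = V - insert v ?B" using nonadj_iff v by blast
  moreover have "insert v ?B \<subseteq> V" using v by blast
  moreover have "v \<notin> ?B" by blast
  ultimately have "card ?A = card V - (1 + card ?B)"
    using card_Diff_subset[of "insert v ?B" V] finV finite_subset by (simp add: card_insert_if)
  moreover have "card ?B = W (Dl (pt v) - {pt v})"
    by (rule card_Vsub) (use lineP Dl pv in blast)
  moreover have "W (Dl (pt v) - {pt v}) = W (Dl (pt v)) - w (pt v)"
    unfolding W_def using Dl pv by (simp add: sum_diff1_nat)
  ultimately show ?thesis using d cardV by simp
qed

lemma deg_ge: assumes v: "v \<in> V" shows "W P - (1 + ((r - 2) * k + c)) \<le> degree E v"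
proof -
  have pv: "pt v \<in> P" "0 < w (pt v)" using ptV v by auto
  have a: "W (Dl (pt v)) \<le> (r - 1) * k" using Dl_le pv unfolding Dl_def by blast
  have b: "k - c \<le> w (pt v)" using w_ge pv by blast
  have "(r - 1) * k - (k - c) = (r - 2) * k + c"
  proof -
    obtain s where s: "r = s + 3" using r3 by (metis add.commute le_Suc_ex)
    show ?thesis using s kct by (simp add: algebra_simps)
  qed
  then have "W (Dl (pt v)) - w (pt v) \<le> (r - 2) * k + c" using a b by linarith
  then show ?thesis using degree_eq[OF v] by linarith
qed

definition "v0 = prod_encode (z0, 0)"

lemma v0V: "v0 \<in> V" and ptv0: "pt v0 = z0"
proof -
  have "w z0 = k - c" using z0ls by (simp add: w_def)
  then have "0 < w z0" using kct t2c c1 by simp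
  then have "(z0, 0) \<in> (SIGMA p:P. {..<w p})" using z0P by simp
  then show "v0 \<in> V" unfolding v0_def V_def by (rule imageI)
  show "pt v0 = z0" unfolding v0_def pt_def by simp
qed

lemma deg_v0: "degree E v0 = W P - (1 + ((r - 2) * k + c))"
proof -
  have "Dl z0 = D0" unfolding Dl_def by (rule parl_eq) (use D0L z0D0 in \<open>auto simp: apar_def\<close>)
  moreover have "w z0 = k - c" using z0ls by (simp add: w_def)
  moreover have "(r - 1) * k - (k - c) = (r - 2) * k + c"
  proof -
    obtain s where s: "r = s + 3" using r3 by (metis add.commute le_Suc_ex)
    show ?thesis using s kct by (simp add: algebra_simps)
  qed
  ultimately show ?thesis using degree_eq[OF v0V] ptv0 W_D0 by simp
qed

lemma min_deg: "min_degree V E = W P - (1 + ((r - 2) * k + c))"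
  unfolding min_degree_def
  by (rule Min_eqI) (use finV deg_ge deg_v0 v0V in \<open>auto intro: image_eqI[of _ _ v0]\<close>)

lemma simple: "simple_graph V E"
  unfolding simple_graph_def using finV unfolding E_def by auto


definition "Sz = {m \<in> L. z0 \<in> m \<and> m \<noteq> D0}"
definition "idx = (SOME h. bij_betw h Sz {0..<r})"
definition col :: "nat set \<Rightarrow> nat" where
  "col e = (if card (pt ` e) = 2 then idx (parl L (THE m. m \<in> L \<and> pt ` e \<subseteq> m) z0) else 0)"
definition "Kc i p = parl L (inv_into Sz idx i) p"

lemma card_Sz: "card Sz = r"
proof -
  have "Sz = {m \<in> L. z0 \<in> m} - {D0}" unfolding Sz_def by blast
  then show ?thesis using lines_through[OF z0P] D0L z0D0 finL by simp
qed

lemma idx_bij: "bij_betw idx Sz {0..<r}"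
proof -
  have "finite Sz" unfolding Sz_def using finL by simp
  then have "\<exists>h. bij_betw h Sz {0..<r}" using ex_bij_betw_finite_nat[of Sz] card_Sz by simp
  then show ?thesis unfolding idx_def by (rule someI_ex)
qed

lemma parl_Sz: assumes m: "m \<in> L" and nD: "\<not> apar m D0" shows "parl L m z0 \<in> Sz"
proof -
  have p: "parl L m z0 \<in> L" "z0 \<in> parl L m z0" "apar (parl L m z0) m" using parl[OF m z0P] by auto
  have "parl L m z0 \<noteq> D0"
  proof
    assume "parl L m z0 = D0"
    then have "apar D0 m" using p(3) by simp
    then show False using nD apar_sym by blast
  qed
  then show ?thesis unfolding Sz_def using p by blast
qed

lemma col_ab: assumes a: "a \<in> V" and b: "b \<in> V" and ne: "pt a \<noteq> pt b" and na: "\<not> nonadj a b"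
  shows "col {a, b} = idx (parl L (lineof L (pt a) (pt b)) z0)"
    and "lineof L (pt a) (pt b) \<in> L" "pt a \<in> lineof L (pt a) (pt b)" "pt b \<in> lineof L (pt a) (pt b)"
    and "\<not> apar (lineof L (pt a) (pt b)) D0"
proof -
  let ?m = "lineof L (pt a) (pt b)"
  have pa: "pt a \<in> P" and pb: "pt b \<in> P" using ptV a b by auto
  show m: "?m \<in> L" "pt a \<in> ?m" "pt b \<in> ?m" using lineof[OF pa pb ne] by auto
  have "card (pt ` {a, b}) = 2" using ne by simp
  moreover have "(THE m. m \<in> L \<and> pt ` {a, b} \<subseteq> m) = ?m"
  proof (rule the_equality)
    show "?m \<in> L \<and> pt ` {a, b} \<subseteq> ?m" using m by simp
    fix m' assume "m' \<in> L \<and> pt ` {a, b} \<subseteq> m'"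
    then show "m' = ?m" using two_eq[of m' ?m "pt a" "pt b"] m ne by auto
  qed
  ultimately show "col {a, b} = idx (parl L ?m z0)" unfolding col_def by simp
  show "\<not> apar ?m D0"
  proof
    assume "apar ?m D0"
    then have "nonadj a b" unfolding nonadj_def using m ne by blast
    then show False using na by simp
  qed
qed

lemma col_lt: "e \<in> E \<Longrightarrow> col e < r"
proof -
  assume "e \<in> E"
  then obtain a b where ab: "e = {a, b}" "a \<in> V" "b \<in> V" "a \<noteq> b" "\<not> nonadj a b"
    unfolding E_def by blast
  show "col e < r"
  proof (cases "pt a = pt b")
    case True
    then have "card (pt ` e) \<noteq> 2" using ab by simp
    then show ?thesis unfolding col_def using r3 by simp
  next
    case False
    note cc = col_ab[OF ab(2) ab(3) False ab(5)]
    have "parl L (lineof L (pt a) (pt b)) z0 \<in> Sz" using parl_Sz cc by blast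
    then show ?thesis using cc(1) ab(1) idx_bij bij_betwE by fastforce
  qed
qed

lemma ecol: "edge_coloring r E col"
  unfolding edge_coloring_def using col_lt by blast

lemma mono_step: assumes e: "{a, b} \<in> E" and ci: "col {a, b} = i" shows "Kc i (pt a) = Kc i (pt b)"
proof (cases "pt a = pt b")
  case True then show ?thesis by simp
next
  case False
  have ab: "a \<in> V" "b \<in> V" "\<not> nonadj a b" using E_mem[OF e] by auto
  note cc = col_ab[OF ab(1) ab(2) False ab(3)]
  define m where "m = lineof L (pt a) (pt b)"
  define m0 where "m0 = parl L m z0"
  have m0S: "m0 \<in> Sz" unfolding m0_def m_def using parl_Sz cc by blast
  have "idx m0 = i" using cc(1) ci unfolding m0_def m_def by simp
  then have inv: "inv_into Sz idx i = m0" using m0S idx_bij bij_betw_imp_inj_on inv_into_f_f by metis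
  have m0L: "m0 \<in> L" using m0S unfolding Sz_def by blast
  have am: "apar m m0" unfolding m0_def using parl[OF cc(2) z0P] apar_sym m_def by blast
  have "Kc i (pt a) = m" unfolding Kc_def inv by (rule parl_eq[OF m0L]) (use cc m_def am in auto)
  moreover have "Kc i (pt b) = m" unfolding Kc_def inv by (rule parl_eq[OF m0L]) (use cc m_def am in auto)
  ultimately show ?thesis by simp
qed

lemma reach: "(mono_adj E col i)\<^sup>*\<^sup>* v u \<Longrightarrow> Kc i (pt u) = Kc i (pt v)"
proof (induction rule: rtranclp_induct)
  case base then show ?case by simp
next
  case (step b c)
  then have "Kc i (pt b) = Kc i (pt c)" using mono_step unfolding mono_adj_def by blast
  then show ?case using step by simp
qed

lemma Kc: assumes i: "i < r" and p: "p \<in> P"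
  shows "Kc i p \<in> L" "p \<in> Kc i p" "\<not> apar (Kc i p) D0"
proof -
  define m0 where "m0 = inv_into Sz idx i"
  have "i \<in> idx ` Sz" using idx_bij i unfolding bij_betw_def by auto
  then have m0S: "m0 \<in> Sz" unfolding m0_def by (rule inv_into_into)
  then have m0: "m0 \<in> L" "z0 \<in> m0" "m0 \<noteq> D0" unfolding Sz_def by auto
  have K: "Kc i p \<in> L" "p \<in> Kc i p" "apar (Kc i p) m0" unfolding Kc_def m0_def[symmetric]
    using parl[OF m0(1) p] by auto
  show "Kc i p \<in> L" "p \<in> Kc i p" using K by auto
  show "\<not> apar (Kc i p) D0"
  proof
    assume "apar (Kc i p) D0"
    then have "apar m0 D0" by (rule apar_trans[OF m0(1) K(1) D0L apar_sym[OF K(3)]])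
    then show False using m0 z0D0 by (auto simp: apar_def)
  qed
qed

lemma comp_card: assumes v: "v \<in> V" and i: "i < r"
  shows "card (mono_component V E col i v) + c \<le> r * k"
proof -
  have pv: "pt v \<in> P" using ptV v by blast
  note K = Kc[OF i pv]
  have sub: "mono_component V E col i v \<subseteq> {u \<in> V. pt u \<in> Kc i (pt v)}"
  proof
    fix u assume "u \<in> mono_component V E col i v"
    then have u: "u \<in> V" "(mono_adj E col i)\<^sup>*\<^sup>* v u" unfolding mono_component_def by auto
    have puP: "pt u \<in> P" using ptV u(1) by blast
    have "pt u \<in> Kc i (pt u)" by (rule Kc(2)[OF i puP])
    then show "u \<in> {u \<in> V. pt u \<in> Kc i (pt v)}" using reach[OF u(2)] u(1) by simp
  qed
  have KP: "Kc i (pt v) \<subseteq> P" using lineP K(1) by blast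
  have "card (mono_component V E col i v) \<le> card {u \<in> V. pt u \<in> Kc i (pt v)}"
    by (rule card_mono) (use finV sub in auto)
  also have "\<dots> = W (Kc i (pt v))" by (rule card_Vsub[OF KP])
  finally show ?thesis using col_le[OF K(1) K(3)] by linarith
qed

lemma mc_le: "mc r V E + c \<le> r * k"
proof -
  let ?Q = "\<lambda>m. \<forall>cc. edge_coloring r E cc \<longrightarrow> (\<exists>i<r. \<exists>v\<in>V. card (mono_component V E cc i v) \<ge> m)"
  have bound: "m \<le> r * k - c" if Qm: "?Q m" for m
  proof -
    have "\<exists>i<r. \<exists>v\<in>V. card (mono_component V E col i v) \<ge> m"
      using mp[OF spec[OF Qm, of col] ecol] .
    then obtain i v where iv: "i < r" "v \<in> V" "card (mono_component V E col i v) \<ge> m"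
      by auto
    then show ?thesis using comp_card[OF iv(2) iv(1)] by linarith
  qed
  have q0: "?Q 0"
  proof (intro allI impI)
    fix cc
    have "(0::nat) < r" using r3 by simp
    then show "\<exists>i<r. \<exists>v\<in>V. card (mono_component V E cc i v) \<ge> 0" using v0V by blast
  qed
  have "?Q (Greatest ?Q)" using GreatestI_nat[of ?Q 0 "r * k - c"] q0 bound by blast
  then have "Greatest ?Q \<le> r * k - c" by (rule bound)
  moreover have "c \<le> r * k" using A6 by linarith
  moreover have "mc r V E = Greatest ?Q" unfolding mc_def by simp
  ultimately show ?thesis by linarith
qed

end

lemma two_elems: "finite A \<Longrightarrow> 2 \<le> card A \<Longrightarrow> \<exists>x y. x \<in> A \<and> y \<in> A \<and> x \<noteq> y"
  using card_le_Suc0_iff_eq[of A] by auto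

theorem theorem3p2:
  fixes n r c :: nat
  assumes "r \<ge> 3" and "c \<ge> 1"
    and "n \<ge> r * (r - 1) * ((r - 1) * (r - 2) + 1) * c"
    and "(r^2 - r) dvd n"
    and "\<exists>(P :: nat set) L. affine_plane r P L"
  shows "\<exists>(V :: nat set) E. simple_graph V E \<and> card V = n \<and>
     real (min_degree V E) = (1 - real (r - 2) / real (r^2 - r)) * real n - real c - 1 \<and>
     real (mc r V E) \<le> real n / real (r - 1) - real c"
proof -
  obtain P :: "nat set" and L where AP: "affine_plane r P L" using assms(5) by blast
  interpret aff r P L using AP assms(1) by unfold_locales auto
  obtain s where s: "r = s + 3" using assms(1) by (metis add.commute le_Suc_ex)
  obtain k where k: "n = (r^2 - r) * k" using assms(4) by blast
  have rr: "r^2 - r = r * (r - 1)" by (simp add: power2_eq_square algebra_simps)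
  have pos: "0 < r * (r - 1)" using assms(1) by simp
  have n_eq0: "n = r * (r - 1) * k" using k rr by simp
  have "r * (r - 1) * (((r - 1) * (r - 2) + 1) * c) \<le> n"
    using assms(3) by (simp only: mult.assoc)
  then have "r * (r - 1) * (((r - 1) * (r - 2) + 1) * c) \<le> r * (r - 1) * k"
    using n_eq0 by simp
  then have kc: "((r - 1) * (r - 2) + 1) * c \<le> k" using pos mult_le_cancel1[of "r * (r - 1)"] by blast
  define t where "t = k - c"
  have kct: "k = c + t" and tc: "(r - 1) * (r - 2) * c \<le> t" using kc unfolding t_def by (simp_all add: algebra_simps)
  have "P \<noteq> {}" using cardP assms(1) by (auto simp: power2_eq_square)
  then obtain z0 where z0: "z0 \<in> P" by blast
  have "card {l \<in> L. z0 \<in> l} = r + 1" using lines_through[OF z0] .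
  then obtain ls D0 where lD: "ls \<in> {l \<in> L. z0 \<in> l}" "D0 \<in> {l \<in> L. z0 \<in> l}" "ls \<noteq> D0"
    using two_elems[of "{l \<in> L. z0 \<in> l}"] finL assms(1) by auto
  have cD0: "card (D0 - {z0}) = r - 1" using cardl lD finl by simp
  have fD: "finite (D0 - {z0})" using finl lD by auto
  have "2 \<le> card (D0 - {z0})" using cD0 assms(1) by simp
  then obtain y g where yg: "y \<in> D0 - {z0}" "g \<in> D0 - {z0}" "g \<noteq> y"
    using two_elems[OF fD] by metis
  interpret cons r P L ls D0 z0 y g k c t
    by unfold_locales (use assms(1,2) lD yg kct tc in auto)
  have cV: "card V = n" using cardV W_P k rr by simp
  have n_eq: "n = r * (r - 1) * k" using k rr by simp
  have big: "1 + ((r - 2) * k + c) \<le> n" using n_eq s kct t2c c1 by (simp add: algebra_simps)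
  have md: "real (min_degree V E) = real n - (1 + ((r - 2) * k + c))"
    using min_deg W_P n_eq big by (simp add: of_nat_diff)
  have r2: "real (r - 2) = real r - 2" and r1: "real (r - 1) = real r - 1" using assms(1) by (simp_all add: of_nat_diff)
  have rsq: "real (r^2 - r) = real r * (real r - 1)" using rr r1 by simp
  have rpos: "real r - 1 > 0" "real r > 0" using assms(1) by simp_all
  have "(1 - real (r - 2) / real (r^2 - r)) * real n - real c - 1 = real n - (real r - 2) * real k - real c - 1"
    unfolding rsq r2 n_eq using rpos by (simp add: r1 field_simps)
  then have mdeq: "real (min_degree V E) = (1 - real (r - 2) / real (r^2 - r)) * real n - real c - 1"
    using md r2 by simp
  have "real n / real (r - 1) = real r * real k" unfolding n_eq r1 using rpos by (simp add: field_simps)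
  moreover have "real (mc r V E) + real c \<le> real r * real k" using mc_le by (metis of_nat_add of_nat_le_iff of_nat_mult)
  ultimately have mceq: "real (mc r V E) \<le> real n / real (r - 1) - real c" by simp
  show ?thesis using simple cV mdeq mceq by blast
qed

end
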